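(* Let $\mathfrak g$ be a $9$-dimensional filiform Lie algebra with associated triple $(5,6,9)$, with parameters $\alpha_1,\alpha_2,\gamma_1,\gamma_2,\beta_{12},\beta_{22},\beta_{13},\beta_{23},\beta_{33}$ with respect to an adapted basis $\{e_h\}$. Then $\alpha_1=0$, $(2\alpha_2+3\gamma_1)(\alpha_2-\gamma_1)=0$ and $\gamma_1\ne0$; moreover $[C^3\mathfrak g,C^3\mathfrak g]=[C^3\mathfrak g,C^4\mathfrak g]=\langle e_2\rangle$, $[C^3\mathfrak g,C^5\mathfrak g]=\{0\}$, $[C^2\mathfrak g,C^6\mathfrak g]=\{0\}$, $[C^2\mathfrak g,C^5\mathfrak g]=\langle e_2\rangle$, $[C^2\mathfrak g,C^4\mathfrak g]=\langle e_2,e_3\rangle$, $[C^2\mathfrak g,C^2\mathfrak g]=[C^2\mathfrak g,C^3\mathfrak g]=\langle e_2,e_3,e_4\rangle$. Consequently every such $\mathfrak g$ has the same Hilbert polynomial: $$\mathrm{HP}_{\mathfrak g}-\mathrm{HP}^{(0)}_{\mathfrak g}=3(t^2s^2+t^2s^3+t^3s^2)+2(t^2s^4+t^4s^2)+(t^2s^5+t^5s^2)+(t^3s^3+t^3s^4+t^4s^3).$$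
   Context: All Lie algebras are over $\mathbb C$; $C^1\mathfrak g=\mathfrak g$, $C^k\mathfrak g=[C^{k-1}\mathfrak g,\mathfrak g]$. A Lie algebra is filiform if $\dim\mathfrak g=n\ge2$ and $\dim C^k\mathfrak g=n-k$ for $2\le k\le n$. An adapted basis of a filiform $\mathfrak g$ is a basis $\{e_1,\dots,e_n\}$ with $[e_1,e_h]=e_{h-1}$ ($3\le h\le n$), $[e_2,e_h]=0$ ($1\le h\le n$), $[e_3,e_h]=0$ ($2\le h\le n$); then $C^k\mathfrak g=\langle e_2,\dots,e_{n-k+1}\rangle$. For non-model filiform $\mathfrak g$, $z_1=\min\{k\ge4:[e_k,e_n]\ne0\}$, $z_2=\min\{k\ge4:[e_k,e_{k+1}]\ne0\}$ (in any adapted basis) are invariants; $(z_1,z_2,n)$ is the associated triple. $P_h(u)$ is the $h$-th coordinate of $u$ in $\{e_h\}$. General law (known result) for triple $(z_1,z_2,n)$: there are complex numbers $\alpha_i$ ($1\le i\le z_2-z_1+1$), $\gamma_j$ ($1\le j\le n-z_2-1$), $\beta_{k\ell}$ ($2\le\ell\le n-z_2$, $1\le k<z_2-z_1+\ell$), the parameters, with $[e_1,e_h]=e_{h-1}$; $[e_{z_1+i},e_{z_2+1}]=\alpha_1e_{i+2}+\dots+\alpha_{i+1}e_2$ ($0\le i\le z_2-z_1$); $[e_{z_1},e_{z_2+j}]=\alpha_1e_{j+1}+\gamma_1e_j+\dots+\gamma_{j-1}e_2$ ($2\le j\le n-z_2$); $[e_{z_1+k},e_{z_2+\ell}]=\sum_{h=2}^{k+\ell}P_h([e_{z_1+k-1},e_{z_2+\ell}]+[e_{z_1+k},e_{z_2+\ell-1}])e_{h+1}+\beta_{k\ell}e_2$;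 all other brackets $[e_a,e_b]$, $2\le a<b$, zero. For $(5,6,9)$ the parameters are $\alpha_1,\alpha_2,\gamma_1,\gamma_2,\beta_{12},\beta_{22},\beta_{13},\beta_{23},\beta_{33}$. Hilbert polynomial: $\mathrm{HP}_{\mathfrak g}(t,s)=\sum_{k,\ell\ge1}\dim[C^k\mathfrak g,C^\ell\mathfrak g]\,t^ks^\ell$; $\mathrm{HP}^{(0)}_{\mathfrak g}=(n-2)ts+\sum_{2\le k\le n-2}(n-k-1)(t^ks+ts^k)$. *)

theory Defs
  imports Complex_Main
begin

text \<open>Vectors of an n-dimensional complex vector space are coordinate functions
  nat => complex supported on 1..n; e h is the h-th basis vector.\<close>

type_synonym cvec = "nat \<Rightarrow> complex"

definition V :: "nat \<Rightarrow> cvec set" where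
  "V n = {u. \<forall>h. h \<notin> {1..n} \<longrightarrow> u h = 0}"

definition e :: "nat \<Rightarrow> cvec" where
  "e h = (\<lambda>i. if i = h then 1 else 0)"

definition vadd :: "cvec \<Rightarrow> cvec \<Rightarrow> cvec" where
  "vadd u v = (\<lambda>h. u h + v h)"

definition smul :: "complex \<Rightarrow> cvec \<Rightarrow> cvec" where
  "smul c u = (\<lambda>h. c * u h)"

definition zerov :: cvec where
  "zerov = (\<lambda>h. 0)"

definition cspan :: "cvec set \<Rightarrow> cvec set" where
  "cspan S = {v. \<exists>F c. finite F \<and> F \<subseteq> S \<and> v = (\<lambda>h. \<Sum>u\<in>F. c u * u h)}"

definition cdim :: "cvec set \<Rightarrow> nat" where
  "cdim W = (LEAST k. \<exists>F. finite F \<and> card F = k \<and> F \<subseteq> W \<and> cspan F = W)"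

definition lie_alg :: "nat \<Rightarrow> (cvec \<Rightarrow> cvec \<Rightarrow> cvec) \<Rightarrow> bool" where
  "lie_alg n B \<longleftrightarrow>
     (\<forall>u\<in>V n. \<forall>v\<in>V n. B u v \<in> V n) \<and>
     (\<forall>u\<in>V n. \<forall>v\<in>V n. \<forall>w\<in>V n. B (vadd u v) w = vadd (B u w) (B v w)) \<and>
     (\<forall>u\<in>V n. \<forall>v\<in>V n. \<forall>w\<in>V n. B w (vadd u v) = vadd (B w u) (B w v)) \<and>
     (\<forall>c. \<forall>u\<in>V n. \<forall>v\<in>V n. B (smul c u) v = smul c (B u v) \<and> B u (smul c v) = smul c (B u v)) \<and>
     (\<forall>u\<in>V n. B u u = zerov) \<and>
     (\<forall>u\<in>V n. \<forall>v\<in>V n. \<forall>w\<in>V n.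
        vadd (vadd (B u (B v w)) (B v (B w u))) (B w (B u v)) = zerov)"

definition brsp :: "(cvec \<Rightarrow> cvec \<Rightarrow> cvec) \<Rightarrow> cvec set \<Rightarrow> cvec set \<Rightarrow> cvec set" where
  "brsp B A A' = cspan {B u v | u v. u \<in> A \<and> v \<in> A'}"

fun lcs :: "nat \<Rightarrow> (cvec \<Rightarrow> cvec \<Rightarrow> cvec) \<Rightarrow> nat \<Rightarrow> cvec set" where
  "lcs n B 0 = V n"
| "lcs n B (Suc 0) = V n"
| "lcs n B (Suc (Suc k)) = brsp B (lcs n B (Suc k)) (V n)"

definition filiform :: "nat \<Rightarrow> (cvec \<Rightarrow> cvec \<Rightarrow> cvec) \<Rightarrow> bool" where
  "filiform n B \<longleftrightarrow> n \<ge> 2 \<and> (\<forall>k. 2 \<le> k \<and> k \<le> n \<longrightarrow> cdim (lcs n B k) = n - k)"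

definition adapted :: "nat \<Rightarrow> (cvec \<Rightarrow> cvec \<Rightarrow> cvec) \<Rightarrow> bool" where
  "adapted n B \<longleftrightarrow>
     (\<forall>h. 3 \<le> h \<and> h \<le> n \<longrightarrow> B (e 1) (e h) = e (h - 1)) \<and>
     (\<forall>h. 1 \<le> h \<and> h \<le> n \<longrightarrow> B (e 2) (e h) = zerov) \<and>
     (\<forall>h. 2 \<le> h \<and> h \<le> n \<longrightarrow> B (e 3) (e h) = zerov)"

text \<open>z is the invariant z_1 (resp. z_2): the minimum of the given set (in particular it exists).\<close>
definition is_z1 :: "nat \<Rightarrow> (cvec \<Rightarrow> cvec \<Rightarrow> cvec) \<Rightarrow> nat \<Rightarrow> bool" where
  "is_z1 n B z \<longleftrightarrow> 4 \<le> z \<and> B (e z) (e n) \<noteq> zerov \<and>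
     (\<forall>k. 4 \<le> k \<and> k < z \<longrightarrow> B (e k) (e n) = zerov)"

definition is_z2 :: "nat \<Rightarrow> (cvec \<Rightarrow> cvec \<Rightarrow> cvec) \<Rightarrow> nat \<Rightarrow> bool" where
  "is_z2 n B z \<longleftrightarrow> 4 \<le> z \<and> B (e z) (e (z + 1)) \<noteq> zerov \<and>
     (\<forall>k. 4 \<le> k \<and> k < z \<longrightarrow> B (e k) (e (k + 1)) = zerov)"

text \<open>General law for triple (z1,z2,n): lawc z1 z2 n al ga be a b h is the h-th
  coordinate of [e_a, e_b] for 2 <= a < b <= n (0 otherwise).
  al i = alpha_i, ga j = gamma_j, be k l = beta_{kl}.\<close>
function lawc :: "nat \<Rightarrow> nat \<Rightarrow> nat \<Rightarrow> (nat \<Rightarrow> complex) \<Rightarrow> (nat \<Rightarrow> complex)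
    \<Rightarrow> (nat \<Rightarrow> nat \<Rightarrow> complex) \<Rightarrow> nat \<Rightarrow> nat \<Rightarrow> nat \<Rightarrow> complex" where
  "lawc z1 z2 n al ga be a b h =
    (if 2 \<le> a \<and> a < b \<and> b \<le> n then
       (if z1 \<le> a \<and> a \<le> z2 \<and> b = z2 + 1 then
          (if 2 \<le> h \<and> h \<le> (a - z1) + 2 then al ((a - z1) + 3 - h) else 0)
        else if a = z1 \<and> z2 + 2 \<le> b then
          (if h = (b - z2) + 1 then al 1
           else if 2 \<le> h \<and> h \<le> b - z2 then ga ((b - z2) + 1 - h) else 0)
        else if z1 < a \<and> z2 + 2 \<le> b then
          (if 3 \<le> h \<and> h \<le> (a - z1) + (b - z2) + 1 then
              lawc z1 z2 n al ga be (a - 1) b (h - 1) + lawc z1 z2 n al ga be a (b - 1) (h - 1)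
           else if h = 2 then be (a - z1) (b - z2) else 0)
        else 0)
     else 0)"
  by pat_completeness auto
termination
  by (relation "measure (\<lambda>(z1,z2,n,al,ga,be,a,b,h). a + b)") auto

definition lawct :: "nat \<Rightarrow> nat \<Rightarrow> nat \<Rightarrow> (nat \<Rightarrow> complex) \<Rightarrow> (nat \<Rightarrow> complex)
    \<Rightarrow> (nat \<Rightarrow> nat \<Rightarrow> complex) \<Rightarrow> nat \<Rightarrow> nat \<Rightarrow> nat \<Rightarrow> complex" where
  "lawct z1 z2 n al ga be a b h =
    (if a = 1 \<and> 3 \<le> b then (if h = b - 1 then 1 else 0)
     else if b = 1 \<and> 3 \<le> a then (if h = a - 1 then -1 else 0)
     else if 2 \<le> a \<and> a < b then lawc z1 z2 n al ga be a b h
     else if 2 \<le> b \<and> b < a then - lawc z1 z2 n al ga be b a h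
     else 0)"

definition brc :: "nat \<Rightarrow> (nat \<Rightarrow> nat \<Rightarrow> nat \<Rightarrow> complex) \<Rightarrow> cvec \<Rightarrow> cvec \<Rightarrow> cvec" where
  "brc n ct u v = (\<lambda>h. if h \<in> {1..n} then (\<Sum>a=1..n. \<Sum>b=1..n. u a * v b * ct a b h) else 0)"

text \<open>Bivariate integer polynomials in t,s as coefficient functions (k,l) |-> coeff of t^k s^l.\<close>
type_synonym bipoly = "nat \<times> nat \<Rightarrow> int"

definition bimono :: "nat \<Rightarrow> nat \<Rightarrow> bipoly" where
  "bimono k l = (\<lambda>p. if p = (k, l) then 1 else 0)"

definition HP :: "nat \<Rightarrow> (cvec \<Rightarrow> cvec \<Rightarrow> cvec) \<Rightarrow> bipoly" where
  "HP n B = (\<lambda>(k, l). if 1 \<le> k \<and> 1 \<le> l then int (cdim (brsp B (lcs n B k) (lcs n B l))) else 0)"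

definition HP0 :: "nat \<Rightarrow> bipoly" where
  "HP0 n = (\<lambda>p. (int n - 2) * bimono 1 1 p
      + (\<Sum>k\<in>{2..n-2}. (int n - int k - 1) * (bimono k 1 p + bimono 1 k p)))"

end

theory Submission
  imports Defs "HOL-Library.Function_Algebras"
begin

lemma sum_fun_app: "(\<Sum>x\<in>A. f x) (h::'b) = (\<Sum>x\<in>A. f x h)"
  by (induct A rule: infinite_finite_induct) auto

interpretation cv: vector_space smul
  by unfold_locales (auto simp: smul_def plus_fun_def fun_eq_iff algebra_simps)

lemma cspan_eq: "cspan S = cv.span S"
  unfolding cspan_def cv.span_explicit
  by (auto simp: smul_def sum_fun_app fun_eq_iff)

definition Z :: "nat set \<Rightarrow> cvec set" where
  "Z I = {v. \<forall>h. h \<notin> I \<longrightarrow> v h = 0}"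

lemma Z_subspace: "cv.subspace (Z I)"
  unfolding cv.subspace_def Z_def by (auto simp: smul_def)

lemma e_in_Z: "i \<in> I \<Longrightarrow> e i \<in> Z I"
  by (auto simp: Z_def e_def)

lemma Z_eq_span: assumes "finite I" shows "Z I = cv.span (e ` I)"
proof
  show "cv.span (e ` I) \<subseteq> Z I"
    by (rule cv.span_minimal) (auto intro: e_in_Z Z_subspace)
  show "Z I \<subseteq> cv.span (e ` I)"
  proof
    fix v assume v: "v \<in> Z I"
    have "v = (\<Sum>i\<in>I. smul (v i) (e i))"
    proof
      fix h
      show "v h = (\<Sum>i\<in>I. smul (v i) (e i)) h"
        using v assms by (auto simp: sum_fun_app smul_def e_def Z_def if_distrib cong: if_cong)
    qed
    also have "\<dots> \<in> cv.span (e ` I)"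
      by (intro cv.span_sum cv.span_scale cv.span_base) auto
    finally show "v \<in> cv.span (e ` I)" .
  qed
qed

lemma e_inj: "inj e"
proof
  fix a b assume "e a = e b"
  then have "e a a = e b a" by simp
  then show "a = b" by (auto simp: e_def split: if_splits)
qed

lemma indep_e: "cv.independent (e ` I)"
  unfolding cv.independent_explicit_module
proof (intro allI impI)
  fix t u v
  assume t: "finite t" "t \<subseteq> e ` I" and s: "(\<Sum>v\<in>t. smul (u v) v) = 0" and v: "v \<in> t"
  obtain j where j: "v = e j" using v t by auto
  have "(\<Sum>w\<in>t. smul (u w) w) j = 0" using s by simp
  moreover have "(\<Sum>w\<in>t. smul (u w) w) j = (\<Sum>w\<in>t. if w = v then u w else 0)"
    unfolding sum_fun_app
  proof (rule sum.cong)
    fix w assume "w \<in> t"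
    then obtain i where "w = e i" using t by auto
    moreover have "(w = v) = (i = j)" using j \<open>w = e i\<close> e_inj by (auto dest: injD)
    ultimately show "smul (u w) w j = (if w = v then u w else 0)"
      using j by (auto simp: smul_def e_def)
  qed simp
  ultimately show "u v = 0" using t v by simp
qed

lemma cdim_Z: assumes "finite I" shows "cdim (Z I) = card I"
proof -
  have dimZ: "cv.dim (Z I) = card I"
    using Z_eq_span[OF assms] cv.dim_span_eq_card_independent[OF indep_e, of I]
      card_image[OF inj_on_subset[OF e_inj]] by simp
  show ?thesis
    unfolding cdim_def
  proof (rule Least_equality)
    show "\<exists>F. finite F \<and> card F = card I \<and> F \<subseteq> Z I \<and> cspan F = Z I"
      using assms Z_eq_span[OF assms] e_in_Z card_image[OF inj_on_subset[OF e_inj]]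
      by (intro exI[of _ "e ` I"]) (auto simp: cspan_eq)
  next
    fix k assume "\<exists>F. finite F \<and> card F = k \<and> F \<subseteq> Z I \<and> cspan F = Z I"
    then obtain F where F: "finite F" "card F = k" "cspan F = Z I" by blast
    have "cv.dim (Z I) \<le> card F"
      by (rule cv.dim_le_card) (use F in \<open>auto simp: cspan_eq\<close>)
    then show "card I \<le> k" using dimZ F by simp
  qed
qed

declare lawc.simps[simp del]

lemma sum_if_const: "(\<Sum>x\<in>S. if P then f x else 0) = (if P then (\<Sum>x\<in>S. f x) else 0)"
  by simp

lemma brc_ee: "a \<in> {1..n} \<Longrightarrow> b \<in> {1..n} \<Longrightarrow>
  brc n c (e a) (e b) = (\<lambda>h. if h \<in> {1..n} then c a b h else 0)"
  by (simp add: brc_def e_def fun_eq_iff if_distrib[of "\<lambda>x. x * _"] sum_if_const cong: if_cong)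

lemma brc_e_left: "a \<in> {1..n} \<Longrightarrow>
  brc n c (e a) w = (\<lambda>h. if h \<in> {1..n} then (\<Sum>b=1..n. w b * c a b h) else 0)"
  by (simp add: brc_def e_def fun_eq_iff if_distrib[of "\<lambda>x. x * _"] sum_if_const cong: if_cong)

lemma sum9: "(\<Sum>b::nat=1..9. f b) = f 1 + f 2 + f 3 + f 4 + f 5 + f 6 + f 7 + f 8 + (f 9 :: complex)"
proof -
  have "{1..9::nat} = {1,2,3,4,5,6,7,8,9}" by auto
  then show ?thesis by (simp add: add_ac)
qed

lemma sum9': "(\<Sum>b::nat=Suc 0..9. f b) = f 1 + f 2 + f 3 + f 4 + f 5 + f 6 + f 7 + f 8 + (f 9 :: complex)"
  using sum9 by simp

lemma lawc_supp: "lawc z1 z2 n al ga be a b h \<noteq> 0 \<Longrightarrow> 2 \<le> h \<and> h + z1 + z2 \<le> a + b + 1"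
  by (subst (asm) lawc.simps) (auto split: if_splits)

context fixes al ga :: "nat \<Rightarrow> complex" and be :: "nat \<Rightarrow> nat \<Rightarrow> complex"
begin

abbreviation "LC \<equiv> lawc 5 6 9 al ga be"

lemma lc_zero: "\<not> (5 \<le> a \<and> 7 \<le> b \<and> a < b \<and> b \<le> 9) \<Longrightarrow> LC a b h = 0"
  by (subst lawc.simps) auto

lemma lc57: "LC 5 7 h = (if h = 2 then al 1 else 0)"
  by (subst lawc.simps) auto
lemma lc58: "LC 5 8 h = (if h = 2 then ga 1 else if h = 3 then al 1 else 0)"
  by (subst lawc.simps) auto
lemma lc59: "LC 5 9 h = (if h = 2 then ga 2 else if h = 3 then ga 1 else if h = 4 then al 1 else 0)"
  by (subst lawc.simps) auto
lemma lc67: "LC 6 7 h = (if h = 2 then al 2 else if h = 3 then al 1 else 0)"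
  by (subst lawc.simps) auto
lemma lc68: "LC 6 8 h = (if h = 2 then be 1 2 else if h = 3 then ga 1 + al 2 else if h = 4 then 2 * al 1 else 0)"
  by (subst lawc.simps) (auto simp: lc58 lc67)
lemma lc69: "LC 6 9 h = (if h = 2 then be 1 3 else if h = 3 then ga 2 + be 1 2 else if h = 4 then 2 * ga 1 + al 2
   else if h = 5 then 3 * al 1 else 0)"
  by (subst lawc.simps) (auto simp: lc59 lc68)
lemma lc78: "LC 7 8 h = (if h = 2 then be 2 2 else if h = 3 then be 1 2 else if h = 4 then ga 1 + al 2
   else if h = 5 then 2 * al 1 else 0)"
  by (subst lawc.simps) (auto simp: lc68 lc_zero)
lemma lc79: "LC 7 9 h = (if h = 2 then be 2 3 else if h = 3 then be 1 3 + be 2 2 else if h = 4 then ga 2 + 2 * be 1 2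
   else if h = 5 then 3 * ga 1 + 2 * al 2 else if h = 6 then 5 * al 1 else 0)"
  by (subst lawc.simps) (auto simp: lc69 lc78)
lemma lc89: "LC 8 9 h = (if h = 2 then be 3 3 else if h = 3 then be 2 3 else if h = 4 then be 1 3 + be 2 2
   else if h = 5 then ga 2 + 2 * be 1 2
   else if h = 6 then 3 * ga 1 + 2 * al 2 else if h = 7 then 5 * al 1 else 0)"
  by (subst lawc.simps) (auto simp: lc79 lc_zero)

end

context fixes al ga :: "nat \<Rightarrow> complex" and be :: "nat \<Rightarrow> nat \<Rightarrow> complex"
begin

abbreviation "CT \<equiv> lawct 5 6 9 al ga be"
abbreviation "BB \<equiv> brc 9 CT"

lemmas ctab = lawct_def lc57 lc58 lc59 lc67 lc68 lc69 lc78 lc79 lc89 lc_zero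

lemma eV: "i \<in> {1..9} \<Longrightarrow> e i \<in> V 9"
  by (auto simp: V_def e_def)

lemma jac_coord:
  assumes "lie_alg 9 BB" "u \<in> {1..9}" "v \<in> {1..9}" "w \<in> {1..9}"
  shows "BB (e u) (BB (e v) (e w)) h + BB (e v) (BB (e w) (e u)) h + BB (e w) (BB (e u) (e v)) h = 0"
proof -
  have J: "\<forall>u\<in>V 9. \<forall>v\<in>V 9. \<forall>w\<in>V 9.
        vadd (vadd (BB u (BB v w)) (BB v (BB w u))) (BB w (BB u v)) = zerov"
    using assms(1) unfolding lie_alg_def by blast
  from J eV[OF assms(2)] eV[OF assms(3)] eV[OF assms(4)]
  have "vadd (vadd (BB (e u) (BB (e v) (e w))) (BB (e v) (BB (e w) (e u)))) (BB (e w) (BB (e u) (e v))) h = zerov h"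
    by metis
  then show ?thesis by (simp add: vadd_def zerov_def)
qed

lemma jac1:
  assumes "lie_alg 9 BB"
  shows "al 1 = 0"
proof -
  have "BB (e 5) (BB (e 8) (e 9)) 2 + BB (e 8) (BB (e 9) (e 5)) 2 + BB (e 9) (BB (e 5) (e 8)) 2 = 0"
    by (rule jac_coord[OF assms]) auto
  then have "5 * al 1 * al 1 = 0"
    apply (simp add: brc_e_left del: One_nat_def)
    apply (simp add: e_def sum9 sum9' ctab algebra_simps)
    done
  then show ?thesis by simp
qed

lemma jac2:
  assumes "lie_alg 9 BB"
  shows "(2 * al 2 + 3 * ga 1) * (al 2 - ga 1) = 0"
proof -
  have a1: "al (Suc 0) = 0" using jac1[OF assms] by simp
  have "BB (e 7) (BB (e 8) (e 9)) 2 + BB (e 8) (BB (e 9) (e 7)) 2 + BB (e 9) (BB (e 7) (e 8)) 2 = 0"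
    by (rule jac_coord[OF assms]) auto
  then have "3 * ga 1 * ga 1 - al 2 * ga 1 - 2 * al 2 * al 2 = 0"
    apply (simp add: brc_e_left del: One_nat_def)
    apply (simp add: e_def sum9 sum9' ctab a1 algebra_simps)
    done
  then show ?thesis by (simp add: algebra_simps)
qed

end

lemma brc_add_l: "brc n c (u + v) w = brc n c u w + brc n c v w"
  by (simp add: brc_def fun_eq_iff algebra_simps sum.distrib)
lemma brc_add_r: "brc n c w (u + v) = brc n c w u + brc n c w v"
  by (simp add: brc_def fun_eq_iff algebra_simps sum.distrib)
lemma brc_smul_l: "brc n c (smul k u) w = smul k (brc n c u w)"
  by (simp add: brc_def smul_def fun_eq_iff algebra_simps sum_distrib_left)
lemma brc_smul_r: "brc n c w (smul k u) = smul k (brc n c w u)"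
  by (simp add: brc_def smul_def fun_eq_iff algebra_simps sum_distrib_left)
lemma brc_zero_l: "brc n c 0 w = 0"
  by (simp add: brc_def fun_eq_iff)
lemma brc_zero_r: "brc n c w 0 = 0"
  by (simp add: brc_def fun_eq_iff)

lemma brsp_span:
  "brsp (brc n c) (cv.span S) (cv.span T) = cv.span {brc n c u v | u v. u \<in> S \<and> v \<in> T}"
  (is "_ = cv.span ?G")
proof -
  have key: "brc n c u v \<in> cv.span ?G" if u: "u \<in> cv.span S" and v: "v \<in> cv.span T" for u v
  proof -
    have step1: "cv.span T \<subseteq> {v. brc n c u v \<in> cv.span ?G}" if "u \<in> S" for u
    proof (rule cv.span_minimal)
      show "T \<subseteq> {v. brc n c u v \<in> cv.span ?G}" using that by (auto intro: cv.span_base)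
      show "cv.subspace {v. brc n c u v \<in> cv.span ?G}"
        by (rule cv.subspaceI) (auto simp: brc_zero_r brc_add_r brc_smul_r
            intro: cv.span_zero cv.span_add cv.span_scale)
    qed
    have "cv.span S \<subseteq> {u. \<forall>v\<in>cv.span T. brc n c u v \<in> cv.span ?G}"
    proof (rule cv.span_minimal)
      show "S \<subseteq> {u. \<forall>v\<in>cv.span T. brc n c u v \<in> cv.span ?G}" using step1 by blast
      show "cv.subspace {u. \<forall>v\<in>cv.span T. brc n c u v \<in> cv.span ?G}"
        by (rule cv.subspaceI) (auto simp: brc_zero_l brc_add_l brc_smul_l
            intro: cv.span_zero cv.span_add cv.span_scale)
    qed
    then show ?thesis using u v by blast
  qed
  show ?thesis
    unfolding brsp_def cspan_eq
  proof
    show "cv.span {brc n c u v |u v. u \<in> cv.span S \<and> v \<in> cv.span T} \<subseteq> cv.span ?G"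
      by (rule cv.span_minimal) (auto intro: key)
    show "cv.span ?G \<subseteq> cv.span {brc n c u v |u v. u \<in> cv.span S \<and> v \<in> cv.span T}"
      by (rule cv.span_mono) (auto intro: cv.span_base)
  qed
qed

lemma Z_empty: "Z {} = {0}"
  by (auto simp: Z_def fun_eq_iff)

lemma tri:
  assumes S: "cv.subspace S" and g: "\<forall>t\<in>{2..m}. \<exists>g\<in>S. g \<in> Z {2..t} \<and> g t \<noteq> 0"
  shows "Z {2..m} \<subseteq> S"
  using g
proof (induction m)
  case 0
  then show ?case using S by (simp add: Z_empty cv.subspace_0)
next
  case (Suc m)
  show ?case
  proof (cases "Suc m < 2")
    case True
    then have "{2..Suc m} = {}" by auto
    then show ?thesis using S by (simp add: Z_empty cv.subspace_0)
  next
    case False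
    have IH: "Z {2..m} \<subseteq> S" using Suc by auto
    obtain g where g: "g \<in> S" "g \<in> Z {2..Suc m}" "g (Suc m) \<noteq> 0"
    proof -
      have "Suc m \<in> {2..Suc m}" using False by auto
      then show ?thesis using Suc.prems that by blast
    qed
    define w where "w = g(Suc m := 0)"
    have "w \<in> Z {2..m}" using g(2) by (auto simp: Z_def w_def)
    then have wS: "w \<in> S" using IH by auto
    have "e (Suc m) = smul (1 / g (Suc m)) (g - w)"
      using g(3) by (auto simp: fun_eq_iff e_def smul_def w_def)
    then have eS: "e (Suc m) \<in> S"
      using g(1) wS by (simp add: S cv.subspace_diff cv.subspace_scale)
    show ?thesis
    proof
      fix v assume v: "v \<in> Z {2..Suc m}"
      have "v(Suc m := 0) \<in> Z {2..m}" using v by (auto simp: Z_def)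
      then have "v(Suc m := 0) \<in> S" using IH by auto
      moreover have "v = smul (v (Suc m)) (e (Suc m)) + v(Suc m := 0)"
        by (auto simp: fun_eq_iff e_def smul_def)
      ultimately show "v \<in> S" using eS S
        by (metis cv.subspace_add cv.subspace_scale)
    qed
  qed
qed

lemma span_gen_eq:
  assumes I: "finite I" and J: "finite J"
    and A: "\<forall>i\<in>I. \<forall>j\<in>J. brc n c (e i) (e j) \<in> Z {2..m}"
    and G: "\<forall>t\<in>{2..m}. \<exists>i\<in>I. \<exists>j\<in>J. brc n c (e i) (e j) \<in> Z {2..t} \<and> brc n c (e i) (e j) t \<noteq> 0"
  shows "brsp (brc n c) (Z I) (Z J) = Z {2..m}"
proof -
  let ?G = "{brc n c u v | u v. u \<in> e ` I \<and> v \<in> e ` J}"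
  have eq: "brsp (brc n c) (Z I) (Z J) = cv.span ?G"
    unfolding Z_eq_span[OF I] Z_eq_span[OF J] by (rule brsp_span)
  have "cv.span ?G \<subseteq> Z {2..m}"
    by (rule cv.span_minimal) (use A Z_subspace in auto)
  moreover have "Z {2..m} \<subseteq> cv.span ?G"
  proof (rule tri)
    show "cv.subspace (cv.span ?G)" by simp
    show "\<forall>t\<in>{2..m}. \<exists>g\<in>cv.span ?G. g \<in> Z {2..t} \<and> g t \<noteq> 0"
    proof
      fix t assume "t \<in> {2..m}"
      then obtain i j where "i \<in> I" "j \<in> J" "brc n c (e i) (e j) \<in> Z {2..t}" "brc n c (e i) (e j) t \<noteq> 0"
        using G by blast
      moreover have "brc n c (e i) (e j) \<in> cv.span ?G"
        using \<open>i \<in> I\<close> \<open>j \<in> J\<close> by (intro cv.span_base) blast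
      ultimately show "\<exists>g\<in>cv.span ?G. g \<in> Z {2..t} \<and> g t \<noteq> 0" by blast
    qed
  qed
  ultimately show ?thesis using eq by auto
qed

context fixes al ga :: "nat \<Rightarrow> complex" and be :: "nat \<Rightarrow> nat \<Rightarrow> complex"
begin

lemma ct_supp: "2 \<le> a \<Longrightarrow> 2 \<le> b \<Longrightarrow> CT al ga be a b h \<noteq> 0 \<Longrightarrow> 2 \<le> h \<and> h + 10 \<le> a + b"
proof -
  assume "2 \<le> a" "2 \<le> b" "CT al ga be a b h \<noteq> 0"
  then have "a < b \<and> LC al ga be a b h \<noteq> 0 \<or> b < a \<and> LC al ga be b a h \<noteq> 0"
    by (auto simp: lawct_def split: if_splits)
  then show ?thesis using lawc_supp[of 5 6 9 al ga be a b h] lawc_supp[of 5 6 9 al ga be b a h] by auto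
qed

lemma lc_supp2: "al 1 = 0 \<Longrightarrow> LC al ga be a b h \<noteq> 0 \<Longrightarrow> 2 \<le> h \<and> h + 11 \<le> a + b"
proof -
  assume a1: "al 1 = 0" and nz: "LC al ga be a b h \<noteq> 0"
  then have "5 \<le> a \<and> 7 \<le> b \<and> a < b \<and> b \<le> 9" using lc_zero by blast
  then have "a=5\<and>b=7 \<or> a=5\<and>b=8 \<or> a=5\<and>b=9 \<or> a=6\<and>b=7 \<or> a=6\<and>b=8 \<or> a=6\<and>b=9 \<or> a=7\<and>b=8 \<or> a=7\<and>b=9 \<or> a=8\<and>b=9"
    by presburger
  then show ?thesis using nz a1
    apply (elim disjE conjE)
    apply (simp_all add: lc57 lc58 lc59 lc67 lc68 lc69 lc78 lc79 lc89 split: if_splits)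
    done
qed

lemma ct_supp2: "al 1 = 0 \<Longrightarrow> 2 \<le> a \<Longrightarrow> 2 \<le> b \<Longrightarrow> CT al ga be a b h \<noteq> 0 \<Longrightarrow> 2 \<le> h \<and> h + 11 \<le> a + b"
proof -
  assume "al 1 = 0" "2 \<le> a" "2 \<le> b" "CT al ga be a b h \<noteq> 0"
  then have "a < b \<and> LC al ga be a b h \<noteq> 0 \<or> b < a \<and> LC al ga be b a h \<noteq> 0"
    by (auto simp: lawct_def split: if_splits)
  then show ?thesis using lc_supp2[of a b h] lc_supp2[of b a h] \<open>al 1 = 0\<close> by auto
qed

lemma ct_1: "CT al ga be 1 b h = (if 3 \<le> b \<and> h = b - 1 then 1 else 0)"
  by (auto simp: lawct_def)
lemma ct_a1: "CT al ga be a 1 h = (if 3 \<le> a \<and> h = a - 1 then -1 else 0)"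
  by (auto simp: lawct_def)

lemma ct_1s: "CT al ga be (Suc 0) b h = (if 3 \<le> b \<and> h = b - 1 then 1 else 0)"
  using ct_1 by simp
lemma ct_a1s: "CT al ga be a (Suc 0) h = (if 3 \<le> a \<and> h = a - 1 then -1 else 0)"
  using ct_a1 by simp

lemma ee: "i \<in> {1..9} \<Longrightarrow> j \<in> {1..9} \<Longrightarrow> BB al ga be (e i) (e j) = (\<lambda>h. if h \<in> {1..9} then CT al ga be i j h else 0)"
  by (rule brc_ee)

lemma ee_Z: "i \<in> {1..9} \<Longrightarrow> j \<in> {1..9} \<Longrightarrow>
   BB al ga be (e i) (e j) \<in> Z T \<longleftrightarrow> (\<forall>h. h \<notin> T \<longrightarrow> h \<in> {1..9} \<longrightarrow> CT al ga be i j h = 0)"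
  by (auto simp: ee Z_def)

lemma ee_at: "i \<in> {1..9} \<Longrightarrow> j \<in> {1..9} \<Longrightarrow> t \<in> {1..9} \<Longrightarrow>
   BB al ga be (e i) (e j) t = CT al ga be i j t"
  by (simp add: ee)

lemma L_VV: "brsp (BB al ga be) (Z {1..9}) (Z {1..9}) = Z {2..8}"
proof (rule span_gen_eq)
  show "\<forall>i\<in>{1..9}. \<forall>j\<in>{1..9}. BB al ga be (e i) (e j) \<in> Z {2..8}"
  proof (intro ballI)
    fix i j :: nat assume ij: "i \<in> {1..9}" "j \<in> {1..9}"
    show "BB al ga be (e i) (e j) \<in> Z {2..8}"
      unfolding ee_Z[OF ij]
    proof (intro allI impI)
      fix h :: nat assume h: "h \<notin> {2..8}" "h \<in> {1..9}"
      show "CT al ga be i j h = 0"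
      proof (cases "i = 1 \<or> j = 1")
        case True then show ?thesis using h ij by (auto simp: ct_1 ct_a1 ct_1s ct_a1s)
      next
        case False then show ?thesis using h ij ct_supp[of i j h] by (cases "CT al ga be i j h = 0") auto
      qed
    qed
  qed
  show "\<forall>t\<in>{2..8}. \<exists>i\<in>{1..9}. \<exists>j\<in>{1..9}. BB al ga be (e i) (e j) \<in> Z {2..t} \<and> BB al ga be (e i) (e j) t \<noteq> 0"
  proof
    fix t :: nat assume t: "t \<in> {2..8}"
    show "\<exists>i\<in>{1..9}. \<exists>j\<in>{1..9}. BB al ga be (e i) (e j) \<in> Z {2..t} \<and> BB al ga be (e i) (e j) t \<noteq> 0"
      using t by (intro bexI[of _ 1] bexI[of _ "t+1"]) (auto simp: ee_Z ee_at ct_1 ct_1s)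
  qed
qed auto

lemma L_R: "M \<le> 9 \<Longrightarrow> brsp (BB al ga be) (Z {2..M}) (Z {1..9}) = Z {2..M-1}"
proof (rule span_gen_eq)
  assume M: "M \<le> 9"
  show "\<forall>i\<in>{2..M}. \<forall>j\<in>{1..9}. BB al ga be (e i) (e j) \<in> Z {2..M-1}"
  proof (intro ballI)
    fix i j :: nat assume ij0: "i \<in> {2..M}" "j \<in> {1..9}"
    then have ij: "i \<in> {1..9}" "j \<in> {1..9}" using M by auto
    show "BB al ga be (e i) (e j) \<in> Z {2..M-1}"
      unfolding ee_Z[OF ij]
    proof (intro allI impI)
      fix h :: nat assume h: "h \<notin> {2..M-1}" "h \<in> {1..9}"
      show "CT al ga be i j h = 0"
      proof (cases "j = 1")
        case True then show ?thesis using h ij0 by (auto simp: ct_a1 ct_a1s)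
      next
        case False then show ?thesis using h ij0 ct_supp[of i j h] by (cases "CT al ga be i j h = 0") auto
      qed
    qed
  qed
  show "\<forall>t\<in>{2..M-1}. \<exists>i\<in>{2..M}. \<exists>j\<in>{1..9}. BB al ga be (e i) (e j) \<in> Z {2..t} \<and> BB al ga be (e i) (e j) t \<noteq> 0"
  proof
    fix t :: nat assume t: "t \<in> {2..M-1}"
    show "\<exists>i\<in>{2..M}. \<exists>j\<in>{1..9}. BB al ga be (e i) (e j) \<in> Z {2..t} \<and> BB al ga be (e i) (e j) t \<noteq> 0"
      using t M by (intro bexI[of _ "t+1"] bexI[of _ 1]) (auto simp: ee_Z ee_at ct_a1 ct_a1s)
  qed
qed auto

lemma L_L: "M \<le> 9 \<Longrightarrow> brsp (BB al ga be) (Z {1..9}) (Z {2..M}) = Z {2..M-1}"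
proof (rule span_gen_eq)
  assume M: "M \<le> 9"
  show "\<forall>i\<in>{1..9}. \<forall>j\<in>{2..M}. BB al ga be (e i) (e j) \<in> Z {2..M-1}"
  proof (intro ballI)
    fix i j :: nat assume ij0: "i \<in> {1..9}" "j \<in> {2..M}"
    then have ij: "i \<in> {1..9}" "j \<in> {1..9}" using M by auto
    show "BB al ga be (e i) (e j) \<in> Z {2..M-1}"
      unfolding ee_Z[OF ij]
    proof (intro allI impI)
      fix h :: nat assume h: "h \<notin> {2..M-1}" "h \<in> {1..9}"
      show "CT al ga be i j h = 0"
      proof (cases "i = 1")
        case True then show ?thesis using h ij0 by (auto simp: ct_1 ct_1s)
      next
        case False then show ?thesis using h ij0 ct_supp[of i j h] by (cases "CT al ga be i j h = 0") auto
      qed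
    qed
  qed
  show "\<forall>t\<in>{2..M-1}. \<exists>i\<in>{1..9}. \<exists>j\<in>{2..M}. BB al ga be (e i) (e j) \<in> Z {2..t} \<and> BB al ga be (e i) (e j) t \<noteq> 0"
  proof
    fix t :: nat assume t: "t \<in> {2..M-1}"
    show "\<exists>i\<in>{1..9}. \<exists>j\<in>{2..M}. BB al ga be (e i) (e j) \<in> Z {2..t} \<and> BB al ga be (e i) (e j) t \<noteq> 0"
      using t M by (intro bexI[of _ 1] bexI[of _ "t+1"]) (auto simp: ee_Z ee_at ct_1 ct_1s)
  qed
qed auto

lemma lcs_eq: "lcs 9 (BB al ga be) k = (if k \<le> 1 then Z {1..9} else Z {2..10-k})"
proof (induction k rule: nat_less_induct)
  case (1 k)
  show ?case
  proof (cases k)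
    case 0 then show ?thesis by (simp add: V_def Z_def)
  next
    case (Suc k')
    show ?thesis
    proof (cases k')
      case 0 then show ?thesis using Suc by (simp add: V_def Z_def)
    next
      case (Suc k'')
      have V9: "V 9 = Z {1..9}" by (simp add: V_def Z_def)
      have IH: "lcs 9 (BB al ga be) (Suc k'') = (if Suc k'' \<le> 1 then Z {1..9} else Z {2..10 - Suc k''})"
        using 1 \<open>k = Suc k'\<close> Suc by simp
      show ?thesis
      proof (cases k'')
        case 0 then show ?thesis using \<open>k = Suc k'\<close> Suc IH V9 L_VV by simp
      next
        case (Suc j)
        have "brsp (BB al ga be) (Z {2..10 - Suc k''}) (Z {1..9}) = Z {2..10 - Suc k'' - 1}"
          by (rule L_R) simp
        then show ?thesis using \<open>k = Suc k'\<close> \<open>k' = Suc k''\<close> IH V9 Suc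
          by (simp add: numeral_eq_Suc)
      qed
    qed
  qed
qed

end

context fixes al ga :: "nat \<Rightarrow> complex" and be :: "nat \<Rightarrow> nat \<Rightarrow> complex"
begin

lemma ct_diag: "2 \<le> i \<Longrightarrow> CT al ga be i i h = 0"
  by (simp add: lawct_def)

lemma brk:
  assumes a1: "al 1 = 0" and MN: "M \<le> 9" "N \<le> 9"
    and A: "\<forall>i\<in>{2..M}. \<forall>j\<in>{2..N}. i \<noteq> j \<longrightarrow> i + j \<le> m + 11"
    and G: "\<forall>t\<in>{2..m}. \<exists>i\<in>{2..M}. \<exists>j\<in>{2..N}. i + j \<le> t + 11 \<and> CT al ga be i j t \<noteq> 0"
  shows "brsp (BB al ga be) (Z {2..M}) (Z {2..N}) = Z {2..m}"
proof (rule span_gen_eq)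
  show "\<forall>i\<in>{2..M}. \<forall>j\<in>{2..N}. BB al ga be (e i) (e j) \<in> Z {2..m}"
  proof (intro ballI)
    fix i j :: nat assume ij0: "i \<in> {2..M}" "j \<in> {2..N}"
    then have ij: "i \<in> {1..9}" "j \<in> {1..9}" using MN by auto
    show "BB al ga be (e i) (e j) \<in> Z {2..m}"
      unfolding ee_Z[OF ij]
    proof (intro allI impI)
      fix h :: nat assume h: "h \<notin> {2..m}" "h \<in> {1..9}"
      show "CT al ga be i j h = 0"
      proof (cases "i = j")
        case True then show ?thesis using ij0 ct_diag by auto
      next
        case False
        then have "i + j \<le> m + 11" using A ij0 by blast
        then show ?thesis using h ij0 ct_supp2[where al=al and ga=ga and be=be, OF a1, of i j h] by (cases "CT al ga be i j h = 0") auto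
      qed
    qed
  qed
  show "\<forall>t\<in>{2..m}. \<exists>i\<in>{2..M}. \<exists>j\<in>{2..N}. BB al ga be (e i) (e j) \<in> Z {2..t} \<and> BB al ga be (e i) (e j) t \<noteq> 0"
  proof
    fix t assume t: "t \<in> {2..m}"
    then obtain i j where ij0: "i \<in> {2..M}" "j \<in> {2..N}" "i + j \<le> t + 11" "CT al ga be i j t \<noteq> 0"
      using G by blast
    then have ij: "i \<in> {1..9}" "j \<in> {1..9}" using MN by auto
    have tin: "t \<in> {1..9}" using t ij0 MN ct_supp2[where al=al and ga=ga and be=be, OF a1, of i j t] by auto
    have "BB al ga be (e i) (e j) \<in> Z {2..t}"
      unfolding ee_Z[OF ij]
    proof (intro allI impI)
      fix h :: nat assume h: "h \<notin> {2..t}" "h \<in> {1..9}"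
      show "CT al ga be i j h = 0"
        using h ij0 ct_supp2[where al=al and ga=ga and be=be, OF a1, of i j h] by (cases "CT al ga be i j h = 0") auto
    qed
    moreover have "BB al ga be (e i) (e j) t \<noteq> 0" using ee_at[OF ij tin] ij0 by simp
    ultimately show "\<exists>i\<in>{2..M}. \<exists>j\<in>{2..N}. BB al ga be (e i) (e j) \<in> Z {2..t} \<and> BB al ga be (e i) (e j) t \<noteq> 0"
      using ij0 by blast
  qed
qed auto

lemma brk_2_2:
  assumes h: "al 1 = 0" "al 2 \<noteq> 0" "ga 1 \<noteq> 0" "ga 1 + al 2 \<noteq> 0"
  shows "brsp (BB al ga be) (Z {2..8}) (Z {2..8}) = Z {2..4}"
proof (rule brk)
  show "\<forall>i::nat\<in>{2..8}. \<forall>j::nat\<in>{2..8}. i \<noteq> j \<longrightarrow> i + j \<le> 4 + 11"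
    unfolding Ball_def atLeastAtMost_iff by presburger
  have T: "{2..4::nat} = {2,3,4}" by auto
  show "\<forall>t\<in>{2..4}. \<exists>i\<in>{2..8}. \<exists>j\<in>{2..8}. i + j \<le> t + 11 \<and> CT al ga be i j t \<noteq> 0"
    unfolding T
  proof (intro ballI)
    fix t :: nat assume "t \<in> {2,3,4}"
    then consider "t = 2" | "t = 3" | "t = 4" by auto
    then show "\<exists>i\<in>{2..8}. \<exists>j\<in>{2..8}. i + j \<le> t + 11 \<and> CT al ga be i j t \<noteq> 0"
    proof cases
      case 1 show ?thesis by (rule bexI[of _ 6], rule bexI[of _ 7]) (use h 1 in \<open>auto simp: ctab neg_eq_iff_add_eq_0 eq_neg_iff_add_eq_0\<close>)
    next
      case 2 show ?thesis by (rule bexI[of _ 6], rule bexI[of _ 8]) (use h 2 in \<open>auto simp: ctab neg_eq_iff_add_eq_0 eq_neg_iff_add_eq_0\<close>)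
    next
      case 3 show ?thesis by (rule bexI[of _ 7], rule bexI[of _ 8]) (use h 3 in \<open>auto simp: ctab neg_eq_iff_add_eq_0 eq_neg_iff_add_eq_0\<close>)
    qed
  qed
qed (use h in auto)

lemma brk_2_3:
  assumes h: "al 1 = 0" "al 2 \<noteq> 0" "ga 1 \<noteq> 0" "ga 1 + al 2 \<noteq> 0"
  shows "brsp (BB al ga be) (Z {2..8}) (Z {2..7}) = Z {2..4}"
proof (rule brk)
  show "\<forall>i::nat\<in>{2..8}. \<forall>j::nat\<in>{2..7}. i \<noteq> j \<longrightarrow> i + j \<le> 4 + 11"
    unfolding Ball_def atLeastAtMost_iff by presburger
  have T: "{2..4::nat} = {2,3,4}" by auto
  show "\<forall>t\<in>{2..4}. \<exists>i\<in>{2..8}. \<exists>j\<in>{2..7}. i + j \<le> t + 11 \<and> CT al ga be i j t \<noteq> 0"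
    unfolding T
  proof (intro ballI)
    fix t :: nat assume "t \<in> {2,3,4}"
    then consider "t = 2" | "t = 3" | "t = 4" by auto
    then show "\<exists>i\<in>{2..8}. \<exists>j\<in>{2..7}. i + j \<le> t + 11 \<and> CT al ga be i j t \<noteq> 0"
    proof cases
      case 1 show ?thesis by (rule bexI[of _ 6], rule bexI[of _ 7]) (use h 1 in \<open>auto simp: ctab neg_eq_iff_add_eq_0 eq_neg_iff_add_eq_0\<close>)
    next
      case 2 show ?thesis by (rule bexI[of _ 8], rule bexI[of _ 6]) (use h 2 in \<open>auto simp: ctab neg_eq_iff_add_eq_0 eq_neg_iff_add_eq_0\<close>)
    next
      case 3 show ?thesis by (rule bexI[of _ 8], rule bexI[of _ 7]) (use h 3 in \<open>auto simp: ctab neg_eq_iff_add_eq_0 eq_neg_iff_add_eq_0\<close>)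
    qed
  qed
qed (use h in auto)

lemma brk_3_2:
  assumes h: "al 1 = 0" "al 2 \<noteq> 0" "ga 1 \<noteq> 0" "ga 1 + al 2 \<noteq> 0"
  shows "brsp (BB al ga be) (Z {2..7}) (Z {2..8}) = Z {2..4}"
proof (rule brk)
  show "\<forall>i::nat\<in>{2..7}. \<forall>j::nat\<in>{2..8}. i \<noteq> j \<longrightarrow> i + j \<le> 4 + 11"
    unfolding Ball_def atLeastAtMost_iff by presburger
  have T: "{2..4::nat} = {2,3,4}" by auto
  show "\<forall>t\<in>{2..4}. \<exists>i\<in>{2..7}. \<exists>j\<in>{2..8}. i + j \<le> t + 11 \<and> CT al ga be i j t \<noteq> 0"
    unfolding T
  proof (intro ballI)
    fix t :: nat assume "t \<in> {2,3,4}"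
    then consider "t = 2" | "t = 3" | "t = 4" by auto
    then show "\<exists>i\<in>{2..7}. \<exists>j\<in>{2..8}. i + j \<le> t + 11 \<and> CT al ga be i j t \<noteq> 0"
    proof cases
      case 1 show ?thesis by (rule bexI[of _ 6], rule bexI[of _ 7]) (use h 1 in \<open>auto simp: ctab neg_eq_iff_add_eq_0 eq_neg_iff_add_eq_0\<close>)
    next
      case 2 show ?thesis by (rule bexI[of _ 6], rule bexI[of _ 8]) (use h 2 in \<open>auto simp: ctab neg_eq_iff_add_eq_0 eq_neg_iff_add_eq_0\<close>)
    next
      case 3 show ?thesis by (rule bexI[of _ 7], rule bexI[of _ 8]) (use h 3 in \<open>auto simp: ctab neg_eq_iff_add_eq_0 eq_neg_iff_add_eq_0\<close>)
    qed
  qed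
qed (use h in auto)

lemma brk_2_4:
  assumes h: "al 1 = 0" "al 2 \<noteq> 0" "ga 1 \<noteq> 0" "ga 1 + al 2 \<noteq> 0"
  shows "brsp (BB al ga be) (Z {2..8}) (Z {2..6}) = Z {2..3}"
proof (rule brk)
  show "\<forall>i::nat\<in>{2..8}. \<forall>j::nat\<in>{2..6}. i \<noteq> j \<longrightarrow> i + j \<le> 3 + 11"
    unfolding Ball_def atLeastAtMost_iff by presburger
  have T: "{2..3::nat} = {2,3}" by auto
  show "\<forall>t\<in>{2..3}. \<exists>i\<in>{2..8}. \<exists>j\<in>{2..6}. i + j \<le> t + 11 \<and> CT al ga be i j t \<noteq> 0"
    unfolding T
  proof (intro ballI)
    fix t :: nat assume "t \<in> {2,3}"
    then consider "t = 2" | "t = 3" by auto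
    then show "\<exists>i\<in>{2..8}. \<exists>j\<in>{2..6}. i + j \<le> t + 11 \<and> CT al ga be i j t \<noteq> 0"
    proof cases
      case 1 show ?thesis by (rule bexI[of _ 7], rule bexI[of _ 6]) (use h 1 in \<open>auto simp: ctab neg_eq_iff_add_eq_0 eq_neg_iff_add_eq_0\<close>)
    next
      case 2 show ?thesis by (rule bexI[of _ 8], rule bexI[of _ 6]) (use h 2 in \<open>auto simp: ctab neg_eq_iff_add_eq_0 eq_neg_iff_add_eq_0\<close>)
    qed
  qed
qed (use h in auto)

lemma brk_4_2:
  assumes h: "al 1 = 0" "al 2 \<noteq> 0" "ga 1 \<noteq> 0" "ga 1 + al 2 \<noteq> 0"
  shows "brsp (BB al ga be) (Z {2..6}) (Z {2..8}) = Z {2..3}"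
proof (rule brk)
  show "\<forall>i::nat\<in>{2..6}. \<forall>j::nat\<in>{2..8}. i \<noteq> j \<longrightarrow> i + j \<le> 3 + 11"
    unfolding Ball_def atLeastAtMost_iff by presburger
  have T: "{2..3::nat} = {2,3}" by auto
  show "\<forall>t\<in>{2..3}. \<exists>i\<in>{2..6}. \<exists>j\<in>{2..8}. i + j \<le> t + 11 \<and> CT al ga be i j t \<noteq> 0"
    unfolding T
  proof (intro ballI)
    fix t :: nat assume "t \<in> {2,3}"
    then consider "t = 2" | "t = 3" by auto
    then show "\<exists>i\<in>{2..6}. \<exists>j\<in>{2..8}. i + j \<le> t + 11 \<and> CT al ga be i j t \<noteq> 0"
    proof cases
      case 1 show ?thesis by (rule bexI[of _ 6], rule bexI[of _ 7]) (use h 1 in \<open>auto simp: ctab neg_eq_iff_add_eq_0 eq_neg_iff_add_eq_0\<close>)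
    next
      case 2 show ?thesis by (rule bexI[of _ 6], rule bexI[of _ 8]) (use h 2 in \<open>auto simp: ctab neg_eq_iff_add_eq_0 eq_neg_iff_add_eq_0\<close>)
    qed
  qed
qed (use h in auto)

lemma brk_2_5:
  assumes h: "al 1 = 0" "al 2 \<noteq> 0" "ga 1 \<noteq> 0" "ga 1 + al 2 \<noteq> 0"
  shows "brsp (BB al ga be) (Z {2..8}) (Z {2..5}) = Z {2..2}"
proof (rule brk)
  show "\<forall>i::nat\<in>{2..8}. \<forall>j::nat\<in>{2..5}. i \<noteq> j \<longrightarrow> i + j \<le> 2 + 11"
    unfolding Ball_def atLeastAtMost_iff by presburger
  have T: "{2..2::nat} = {2}" by auto
  show "\<forall>t\<in>{2..2}. \<exists>i\<in>{2..8}. \<exists>j\<in>{2..5}. i + j \<le> t + 11 \<and> CT al ga be i j t \<noteq> 0"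
    unfolding T
  proof (intro ballI)
    fix t :: nat assume "t \<in> {2}"
    then consider "t = 2" by auto
    then show "\<exists>i\<in>{2..8}. \<exists>j\<in>{2..5}. i + j \<le> t + 11 \<and> CT al ga be i j t \<noteq> 0"
    proof cases
      case 1 show ?thesis by (rule bexI[of _ 8], rule bexI[of _ 5]) (use h 1 in \<open>auto simp: ctab neg_eq_iff_add_eq_0 eq_neg_iff_add_eq_0\<close>)
    qed
  qed
qed (use h in auto)

lemma brk_5_2:
  assumes h: "al 1 = 0" "al 2 \<noteq> 0" "ga 1 \<noteq> 0" "ga 1 + al 2 \<noteq> 0"
  shows "brsp (BB al ga be) (Z {2..5}) (Z {2..8}) = Z {2..2}"
proof (rule brk)
  show "\<forall>i::nat\<in>{2..5}. \<forall>j::nat\<in>{2..8}. i \<noteq> j \<longrightarrow> i + j \<le> 2 + 11"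
    unfolding Ball_def atLeastAtMost_iff by presburger
  have T: "{2..2::nat} = {2}" by auto
  show "\<forall>t\<in>{2..2}. \<exists>i\<in>{2..5}. \<exists>j\<in>{2..8}. i + j \<le> t + 11 \<and> CT al ga be i j t \<noteq> 0"
    unfolding T
  proof (intro ballI)
    fix t :: nat assume "t \<in> {2}"
    then consider "t = 2" by auto
    then show "\<exists>i\<in>{2..5}. \<exists>j\<in>{2..8}. i + j \<le> t + 11 \<and> CT al ga be i j t \<noteq> 0"
    proof cases
      case 1 show ?thesis by (rule bexI[of _ 5], rule bexI[of _ 8]) (use h 1 in \<open>auto simp: ctab neg_eq_iff_add_eq_0 eq_neg_iff_add_eq_0\<close>)
    qed
  qed
qed (use h in auto)

lemma brk_3_3:
  assumes h: "al 1 = 0" "al 2 \<noteq> 0" "ga 1 \<noteq> 0" "ga 1 + al 2 \<noteq> 0"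
  shows "brsp (BB al ga be) (Z {2..7}) (Z {2..7}) = Z {2..2}"
proof (rule brk)
  show "\<forall>i::nat\<in>{2..7}. \<forall>j::nat\<in>{2..7}. i \<noteq> j \<longrightarrow> i + j \<le> 2 + 11"
    unfolding Ball_def atLeastAtMost_iff by presburger
  have T: "{2..2::nat} = {2}" by auto
  show "\<forall>t\<in>{2..2}. \<exists>i\<in>{2..7}. \<exists>j\<in>{2..7}. i + j \<le> t + 11 \<and> CT al ga be i j t \<noteq> 0"
    unfolding T
  proof (intro ballI)
    fix t :: nat assume "t \<in> {2}"
    then consider "t = 2" by auto
    then show "\<exists>i\<in>{2..7}. \<exists>j\<in>{2..7}. i + j \<le> t + 11 \<and> CT al ga be i j t \<noteq> 0"
    proof cases
      case 1 show ?thesis by (rule bexI[of _ 6], rule bexI[of _ 7]) (use h 1 in \<open>auto simp: ctab neg_eq_iff_add_eq_0 eq_neg_iff_add_eq_0\<close>)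
    qed
  qed
qed (use h in auto)

lemma brk_3_4:
  assumes h: "al 1 = 0" "al 2 \<noteq> 0" "ga 1 \<noteq> 0" "ga 1 + al 2 \<noteq> 0"
  shows "brsp (BB al ga be) (Z {2..7}) (Z {2..6}) = Z {2..2}"
proof (rule brk)
  show "\<forall>i::nat\<in>{2..7}. \<forall>j::nat\<in>{2..6}. i \<noteq> j \<longrightarrow> i + j \<le> 2 + 11"
    unfolding Ball_def atLeastAtMost_iff by presburger
  have T: "{2..2::nat} = {2}" by auto
  show "\<forall>t\<in>{2..2}. \<exists>i\<in>{2..7}. \<exists>j\<in>{2..6}. i + j \<le> t + 11 \<and> CT al ga be i j t \<noteq> 0"
    unfolding T
  proof (intro ballI)
    fix t :: nat assume "t \<in> {2}"
    then consider "t = 2" by auto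
    then show "\<exists>i\<in>{2..7}. \<exists>j\<in>{2..6}. i + j \<le> t + 11 \<and> CT al ga be i j t \<noteq> 0"
    proof cases
      case 1 show ?thesis by (rule bexI[of _ 7], rule bexI[of _ 6]) (use h 1 in \<open>auto simp: ctab neg_eq_iff_add_eq_0 eq_neg_iff_add_eq_0\<close>)
    qed
  qed
qed (use h in auto)

lemma brk_4_3:
  assumes h: "al 1 = 0" "al 2 \<noteq> 0" "ga 1 \<noteq> 0" "ga 1 + al 2 \<noteq> 0"
  shows "brsp (BB al ga be) (Z {2..6}) (Z {2..7}) = Z {2..2}"
proof (rule brk)
  show "\<forall>i::nat\<in>{2..6}. \<forall>j::nat\<in>{2..7}. i \<noteq> j \<longrightarrow> i + j \<le> 2 + 11"
    unfolding Ball_def atLeastAtMost_iff by presburger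
  have T: "{2..2::nat} = {2}" by auto
  show "\<forall>t\<in>{2..2}. \<exists>i\<in>{2..6}. \<exists>j\<in>{2..7}. i + j \<le> t + 11 \<and> CT al ga be i j t \<noteq> 0"
    unfolding T
  proof (intro ballI)
    fix t :: nat assume "t \<in> {2}"
    then consider "t = 2" by auto
    then show "\<exists>i\<in>{2..6}. \<exists>j\<in>{2..7}. i + j \<le> t + 11 \<and> CT al ga be i j t \<noteq> 0"
    proof cases
      case 1 show ?thesis by (rule bexI[of _ 6], rule bexI[of _ 7]) (use h 1 in \<open>auto simp: ctab neg_eq_iff_add_eq_0 eq_neg_iff_add_eq_0\<close>)
    qed
  qed
qed (use h in auto)

end

definition mmf :: "nat \<Rightarrow> nat \<Rightarrow> nat" where
  "mmf k l = (if (k=2\<and>l=2) \<or> (k=2\<and>l=3) \<or> (k=3\<and>l=2) then 4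
     else if (k=2\<and>l=4) \<or> (k=4\<and>l=2) then 3
     else if (k=2\<and>l=5) \<or> (k=5\<and>l=2) \<or> (k=3\<and>l=3) \<or> (k=3\<and>l=4) \<or> (k=4\<and>l=3) then 2 else 1)"

lemma cdim_Zint: "cdim (Z {2..m}) = m - 1"
  by (simp add: cdim_Z)

lemma Z_zero: "Z {2..Suc 0} = {zerov}"
  by (simp add: Z_empty zerov_def zero_fun_def)

lemma Z_span: "finite I \<Longrightarrow> Z I = cspan (e ` I)"
  by (simp add: Z_eq_span cspan_eq)

lemma V9Z: "V 9 = Z {1..9}" by (simp add: V_def Z_def)

context fixes al ga :: "nat \<Rightarrow> complex" and be :: "nat \<Rightarrow> nat \<Rightarrow> complex"
begin

lemma brk_one:
  assumes a1: "al 1 = 0" and MN: "M \<le> 9" "N \<le> 9"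
    and A: "\<forall>i\<in>{2..M}. \<forall>j\<in>{2..N}. i \<noteq> j \<longrightarrow> i + j \<le> 12"
  shows "brsp (BB al ga be) (Z {2..M}) (Z {2..N}) = Z {2..1}"
  by (rule brk[where al=al and ga=ga and be=be, OF a1 MN]) (use A in auto)

lemma brk_all:
  assumes h: "al 1 = 0" "al 2 \<noteq> 0" "ga 1 \<noteq> 0" "ga 1 + al 2 \<noteq> 0" and kl: "2 \<le> k" "2 \<le> l"
  shows "brsp (BB al ga be) (lcs 9 (BB al ga be) k) (lcs 9 (BB al ga be) l) = Z {2..mmf k l}"
proof -
  have L: "lcs 9 (BB al ga be) k = Z {2..10-k}" "lcs 9 (BB al ga be) l = Z {2..10-l}"
    using kl by (simp_all add: lcs_eq)
  consider "k=2\<and>l=2" | "k=2\<and>l=3" | "k=3\<and>l=2" | "k=2\<and>l=4" | "k=4\<and>l=2" | "k=2\<and>l=5" | "k=5\<and>l=2"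
    | "k=3\<and>l=3" | "k=3\<and>l=4" | "k=4\<and>l=3" | "mmf k l = 1" by (smt (verit) mmf_def)
  then show ?thesis
  proof cases
    case 1 then show ?thesis using brk_2_2[where al=al and ga=ga and be=be, OF h] L by (simp add: mmf_def)
  next
    case 2 then show ?thesis using brk_2_3[where al=al and ga=ga and be=be, OF h] L by (simp add: mmf_def)
  next
    case 3 then show ?thesis using brk_3_2[where al=al and ga=ga and be=be, OF h] L by (simp add: mmf_def)
  next
    case 4 then show ?thesis using brk_2_4[where al=al and ga=ga and be=be, OF h] L by (simp add: mmf_def)
  next
    case 5 then show ?thesis using brk_4_2[where al=al and ga=ga and be=be, OF h] L by (simp add: mmf_def)
  next
    case 6 then show ?thesis using brk_2_5[where al=al and ga=ga and be=be, OF h] L by (simp add: mmf_def)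
  next
    case 7 then show ?thesis using brk_5_2[where al=al and ga=ga and be=be, OF h] L by (simp add: mmf_def)
  next
    case 8 then show ?thesis using brk_3_3[where al=al and ga=ga and be=be, OF h] L by (simp add: mmf_def)
  next
    case 9 then show ?thesis using brk_3_4[where al=al and ga=ga and be=be, OF h] L by (simp add: mmf_def)
  next
    case 10 then show ?thesis using brk_4_3[where al=al and ga=ga and be=be, OF h] L by (simp add: mmf_def)
  next
    case 11
    have kl8: "8 \<le> k + l"
    proof (rule ccontr)
      assume "\<not> 8 \<le> k + l"
      then have "k \<in> {2,3,4,5}" "l \<in> {2,3,4,5}" using kl by auto
      then show False using 11 \<open>\<not> 8 \<le> k + l\<close> by (auto simp: mmf_def)
    qed
    have A: "\<forall>i\<in>{2..10-k}. \<forall>j\<in>{2..10-l}. i \<noteq> j \<longrightarrow> i + j \<le> 12"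
      using kl8 by auto
    have "brsp (BB al ga be) (Z {2..10-k}) (Z {2..10-l}) = Z {2..1}"
      by (rule brk_one[OF h(1) _ _ A]) (use kl in auto)
    then show ?thesis using L 11 by simp
  qed
qed

definition DD :: "nat \<Rightarrow> nat \<Rightarrow> nat" where
  "DD k l = (if k = 1 then 8 - l else if l = 1 then 8 - k else mmf k l - 1)"

lemma dims:
  assumes h: "al 1 = 0" "al 2 \<noteq> 0" "ga 1 \<noteq> 0" "ga 1 + al 2 \<noteq> 0" and kl: "1 \<le> k" "1 \<le> l"
  shows "cdim (brsp (BB al ga be) (lcs 9 (BB al ga be) k) (lcs 9 (BB al ga be) l)) = DD k l"
proof -
  consider "k = 1 \<and> l = 1" | "k = 1 \<and> 2 \<le> l" | "2 \<le> k \<and> l = 1" | "2 \<le> k \<and> 2 \<le> l" using kl by linarith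
  then show ?thesis
  proof cases
    case 1 then show ?thesis using L_VV[of al ga be] by (simp add: lcs_eq cdim_Zint DD_def V9Z)
  next
    case 2
    have "brsp (BB al ga be) (Z {1..9}) (Z {2..10-l}) = Z {2..10-l-1}" by (rule L_L) (use 2 in auto)
    then show ?thesis using 2 by (simp add: lcs_eq cdim_Zint DD_def V9Z)
  next
    case 3
    have "brsp (BB al ga be) (Z {2..10-k}) (Z {1..9}) = Z {2..10-k-1}" by (rule L_R) (use 3 in auto)
    then show ?thesis using 3 by (simp add: lcs_eq cdim_Zint DD_def V9Z)
  next
    case 4 then show ?thesis using brk_all[OF h] by (simp add: cdim_Zint DD_def)
  qed
qed

end

lemma HP0_val2: "HP0 9 (k,l) = (if k = 1 \<and> 1 \<le> l \<and> l \<le> 7 then int (8 - l)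
   else if l = 1 \<and> 2 \<le> k \<and> k \<le> 7 then int (8 - k) else 0)"
proof -
  have e1: "(\<Sum>x\<in>{2..9-2::nat}. (int 9 - int x - 1) * (bimono x 1 (k,l) + bimono 1 x (k,l)))
     = (\<Sum>x\<in>{2..7::nat}. (if x = k \<and> l = 1 then int 8 - int x else 0))
     + (\<Sum>x\<in>{2..7::nat}. (if x = l \<and> k = 1 then int 8 - int x else 0))"
    unfolding sum.distrib[symmetric] by (rule sum.cong) (auto simp: bimono_def)
  have e2: "(\<Sum>x\<in>{2..7::nat}. (if x = k \<and> l = 1 then int 8 - int x else 0)) = (if l = 1 \<and> 2 \<le> k \<and> k \<le> 7 then int 8 - int k else 0)"
    by (cases "l = 1") (simp_all add: sum.delta)
  have e3: "(\<Sum>x\<in>{2..7::nat}. (if x = l \<and> k = 1 then int 8 - int x else 0)) = (if k = 1 \<and> 2 \<le> l \<and> l \<le> 7 then int 8 - int l else 0)"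
    by (cases "k = 1") (simp_all add: sum.delta)
  show ?thesis unfolding HP0_def e1 e2 e3 by (auto simp: bimono_def)
qed

lemma bz1: "k < a \<Longrightarrow> bimono a b (k,l) = 0" by (simp add: bimono_def)
lemma bz2: "l < b \<Longrightarrow> bimono a b (k,l) = 0" by (simp add: bimono_def)
lemma bz4: "a + b < k + l \<Longrightarrow> bimono a b (k,l) = 0" by (auto simp: bimono_def)
lemma bsame: "bimono a b (a,b) = 1" by (simp add: bimono_def)

lemma final_eq:
  fixes B :: "cvec \<Rightarrow> cvec \<Rightarrow> cvec"
  assumes hd: "\<And>k l. 1 \<le> k \<Longrightarrow> 1 \<le> l \<Longrightarrow> HP 9 B (k,l) = int (DD k l)"
  shows "\<forall>p. HP 9 B p - HP0 9 p =
          3 * (bimono 2 2 p + bimono 2 3 p + bimono 3 2 p) + 2 * (bimono 2 4 p + bimono 4 2 p)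
          + (bimono 2 5 p + bimono 5 2 p) + (bimono 3 3 p + bimono 3 4 p + bimono 4 3 p)"
proof
  fix p :: "nat \<times> nat"
  obtain k l where p: "p = (k,l)" by (cases p)
  consider "k = 0" | "l = 0" | "k = 1 \<and> 1 \<le> l" | "l = 1 \<and> 2 \<le> k" | "2 \<le> k \<and> 2 \<le> l" by linarith
  then show "HP 9 B p - HP0 9 p =
          3 * (bimono 2 2 p + bimono 2 3 p + bimono 3 2 p) + 2 * (bimono 2 4 p + bimono 4 2 p)
          + (bimono 2 5 p + bimono 5 2 p) + (bimono 3 3 p + bimono 3 4 p + bimono 4 3 p)"
  proof cases
    case 1 then show ?thesis unfolding p by (simp add: HP_def HP0_val2 bz1)
  next
    case 2 then show ?thesis unfolding p by (simp add: HP_def HP0_val2 bz2)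
  next
    case 3
    then have k1: "k = 1" "1 \<le> l" by auto
    then show ?thesis unfolding p using hd[of k l] by (simp add: HP0_val2 bz1 DD_def)
  next
    case 4
    then have l1: "l = 1" "2 \<le> k" by auto
    then show ?thesis unfolding p using hd[of k l] by (simp add: HP0_val2 bz2 DD_def)
  next
    case 5
    then have kl: "2 \<le> k" "2 \<le> l" by auto
    have hp: "HP 9 B (k,l) = int (mmf k l - 1)" using hd[of k l] kl by (simp add: DD_def)
    have h0: "HP0 9 (k,l) = 0" using kl by (simp add: HP0_val2)
    consider "k=2\<and>l=2" | "k=2\<and>l=3" | "k=3\<and>l=2" | "k=2\<and>l=4" | "k=4\<and>l=2" | "k=2\<and>l=5" | "k=5\<and>l=2"
      | "k=3\<and>l=3" | "k=3\<and>l=4" | "k=4\<and>l=3" | "8 \<le> k + l \<and> mmf k l = 1"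
    proof -
      have "k + l \<le> 7 \<Longrightarrow> k \<in> {2,3,4,5} \<and> l \<in> {2,3,4,5}" using kl by auto
      then show ?thesis using that by (cases "k + l \<le> 7") (auto simp: mmf_def)
    qed
    moreover have eq: "HP 9 B (k,l) - HP0 9 (k,l) = int (mmf k l - 1)" using hp h0 by simp
    ultimately show ?thesis unfolding p eq
      by cases (simp_all add: mmf_def bimono_def bz4)
  qed
qed

lemma Zc: "Z {2..2} = cspan {e 2}" "Z {2..3} = cspan {e 2, e 3}" "Z {2..4} = cspan {e 2, e 3, e 4}"
  "Z {2..Suc 0} = {zerov}"
proof -
  have "{2..2::nat} = {2}" "{2..3::nat} = {2,3}" "{2..4::nat} = {2,3,4}" by auto
  then show "Z {2..2} = cspan {e 2}" "Z {2..3} = cspan {e 2, e 3}" "Z {2..4} = cspan {e 2, e 3, e 4}"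
    by (simp_all add: Z_span)
  show "Z {2..Suc 0} = {zerov}" by (rule Z_zero)
qed

lemma Zc2: "Z {2} = cspan {e 2}" "Z {} = {zerov}"
  using Zc(1) Zc(4) by simp_all

theorem mainTheorem18:
  fixes al ga :: "nat \<Rightarrow> complex" and be :: "nat \<Rightarrow> nat \<Rightarrow> complex"
  defines "B \<equiv> brc 9 (lawct 5 6 9 al ga be)"
  assumes "lie_alg 9 B"
    and "filiform 9 B"
    and "adapted 9 B"
    and "is_z1 9 B 5"
    and "is_z2 9 B 6"
  shows "al 1 = 0 \<and> (2 * al 2 + 3 * ga 1) * (al 2 - ga 1) = 0 \<and> ga 1 \<noteq> 0
    \<and> brsp B (lcs 9 B 3) (lcs 9 B 3) = cspan {e 2}
    \<and> brsp B (lcs 9 B 3) (lcs 9 B 4) = cspan {e 2}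
    \<and> brsp B (lcs 9 B 3) (lcs 9 B 5) = {zerov}
    \<and> brsp B (lcs 9 B 2) (lcs 9 B 6) = {zerov}
    \<and> brsp B (lcs 9 B 2) (lcs 9 B 5) = cspan {e 2}
    \<and> brsp B (lcs 9 B 2) (lcs 9 B 4) = cspan {e 2, e 3}
    \<and> brsp B (lcs 9 B 2) (lcs 9 B 2) = cspan {e 2, e 3, e 4}
    \<and> brsp B (lcs 9 B 2) (lcs 9 B 3) = cspan {e 2, e 3, e 4}
    \<and> (\<forall>p. HP 9 B p - HP0 9 p =
          3 * (bimono 2 2 p + bimono 2 3 p + bimono 3 2 p) + 2 * (bimono 2 4 p + bimono 4 2 p)
          + (bimono 2 5 p + bimono 5 2 p) + (bimono 3 3 p + bimono 3 4 p + bimono 4 3 p))"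
proof -
  have lie: "lie_alg 9 (BB al ga be)" using assms(2) unfolding B_def .
  have a1: "al 1 = 0" by (rule jac1[where al=al and ga=ga and be=be, OF lie])
  have q: "(2 * al 2 + 3 * ga 1) * (al 2 - ga 1) = 0" by (rule jac2[where al=al and ga=ga and be=be, OF lie])
  have z2: "BB al ga be (e 6) (e 7) \<noteq> zerov" using assms(6) unfolding B_def is_z2_def by simp
  have a2: "al 2 \<noteq> 0"
  proof
    assume "al 2 = 0"
    then have "BB al ga be (e 6) (e 7) = zerov"
      using a1 by (simp add: ee fun_eq_iff zerov_def ctab)
    then show False using z2 by simp
  qed
  have g1: "ga 1 \<noteq> 0"
  proof
    assume "ga 1 = 0"
    then have "al 2 * al 2 = 0" using q by (simp add: algebra_simps)
    then show False using a2 by simp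
  qed
  have s: "ga 1 + al 2 \<noteq> 0"
  proof
    assume "ga 1 + al 2 = 0"
    then have "al 2 = - ga 1" by (simp add: eq_neg_iff_add_eq_0 add.commute)
    then have "ga 1 * ga 1 = 0" using q by (simp add: algebra_simps)
    then show False using g1 by simp
  qed
  note h = a1 a2 g1 s
  have b: "\<And>k l. 2 \<le> k \<Longrightarrow> 2 \<le> l \<Longrightarrow> brsp B (lcs 9 B k) (lcs 9 B l) = Z {2..mmf k l}"
    unfolding B_def by (rule brk_all[where al=al and ga=ga and be=be, OF h])
  have HPv: "\<forall>p. HP 9 B p - HP0 9 p =
          3 * (bimono 2 2 p + bimono 2 3 p + bimono 3 2 p) + 2 * (bimono 2 4 p + bimono 4 2 p)
          + (bimono 2 5 p + bimono 5 2 p) + (bimono 3 3 p + bimono 3 4 p + bimono 4 3 p)"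
  proof (rule final_eq)
    fix k l :: nat assume "1 \<le> k" "1 \<le> l"
    then show "HP 9 B (k,l) = int (DD k l)"
      unfolding HP_def B_def using dims[where al=al and ga=ga and be=be, OF h, of k l] by simp
  qed
  show ?thesis
    using h q HPv b[of 3 3] b[of 3 4] b[of 3 5] b[of 2 6] b[of 2 5] b[of 2 4] b[of 2 2] b[of 2 3]
    by (simp add: mmf_def Zc Zc2)
qed

end
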